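(* The algebra $\mathcal{A}_{+++}$ is the unital algebra generated by $\tilde k,\tilde l,\tilde p,\tilde q,r,\tilde m,\tilde n,\tilde s,\tilde t$ subject exactly to the $40$ relations $xy=yx=0$ for all $x\in X_1=\{\tilde k,\tilde l,\tilde p,\tilde q,r\}$ and $y\in X_2=\{\tilde m,\tilde n,\tilde s,\tilde t\}$. Consequently, there are no relations among the generators in $X_1$ nor among those in $X_2$, and $\mathcal{A}_{+++}$ is isomorphic to the fibre product $\{(f,g)\in \mathbb{C}\langle X_1\rangle\times\mathbb{C}\langle X_2\rangle : f(0)=g(0)\}$, where $\mathbb{C}\langle X_i\rangle$ is the free unital algebra on $X_i$ and $f(0)$ denotes the constant term.
   Context: Work over $\mathbb{C}$. For $\epsilon_a,\epsilon_b,\epsilon_c\in\{\pm1\}$ let $a_+=b_+=c_+=\tfrac12$, $a_-=\tfrac{\epsilon_a}{2}$, $b_-=\tfrac{\epsilon_b}{2}$, $c_-=\tfrac{\epsilon_c}{2}$. In the ordered basis $e_1\otimes e_1,e_1\otimes e_2,e_1\otimes e_3,e_2\otimes e_1,\dots,e_3\otimes e_3$ of $\mathbb{C}^3\otimes\mathbb{C}^3$ let $$\widehat R=\begin{pmatrix} a_+&0&0&0&0&0&0&0&a_-\\ 0&b_+&0&0&0&0&0&b_-&0\\ 0&0&a_+&0&0&0&a_-&0&0\\ 0&0&0&c_+&0&c_-&0&0&0\\ 0&0&0&0&1&0&0&0&0\\ 0&0&0&c_-&0&c_+&0&0&0\\ 0&0&a_-&0&0&0&a_+&0&0\\ 0&b_-&0&0&0&0&0&b_+&0\\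 a_-&0&0&0&0&0&0&0&a_+\end{pmatrix},$$ and $R=P\widehat R$ with $P$ the flip $e_i\otimes e_j\mapsto e_j\otimes e_i$. Let $T=\begin{pmatrix}k&p&l\\ q&r&s\\ m&t&n\end{pmatrix}$, $T_1=T\otimes I_3$, $T_2=I_3\otimes T$, and let $\mathcal{A}_{\epsilon_a\epsilon_b\epsilon_c}$ be the unital associative algebra generated by $k,l,m,n,p,q,r,s,t$ subject to $R\,T_1T_2=T_2T_1R$. $\mathcal{A}_{+++}$ denotes the case $\epsilon_a=\epsilon_b=\epsilon_c=+1$. New generators: $\tilde k=\tfrac12(k+n)$, $\tilde n=\tfrac12(k-n)$, $\tilde l=\tfrac12(l+m)$, $\tilde m=\tfrac12(l-m)$, $\tilde p=\tfrac12(p+t)$, $\tilde t=\tfrac12(p-t)$, $\tilde q=\tfrac12(q+s)$, $\tilde s=\tfrac12(q-s)$. *)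

theory Defs
  imports Complex_Main "HOL-Library.Poly_Mapping"
begin

text \<open>Words over an alphabet 'g form the free monoid (written additively, since
Poly_Mapping's convolution product uses a monoid_add structure on the exponents).\<close>

datatype 'g word = Word (letters: "'g list")

instantiation word :: (type) monoid_add
begin
definition zero_word :: "'g word" where "zero_word = Word []"
definition plus_word :: "'g word \<Rightarrow> 'g word \<Rightarrow> 'g word" where
  "plus_word u v = Word (letters u @ letters v)"
instance by standard (auto simp: zero_word_def plus_word_def)
end

text \<open>The free unital associative C-algebra C<g> : finitely supported
complex functions on words, with concatenation-convolution product.\<close>
type_synonym 'g ncpoly = "'g word \<Rightarrow>\<^sub>0 complex"

definition scal :: "complex \<Rightarrow> 'g ncpoly" where
  "scal c = Poly_Mapping.single 0 c"

definition var :: "'g \<Rightarrow> 'g ncpoly" where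
  "var g = Poly_Mapping.single (Word [g]) 1"

definition const_term :: "'g ncpoly \<Rightarrow> complex" where
  "const_term f = Poly_Mapping.lookup f 0"

definition subst :: "('g \<Rightarrow> 'h ncpoly) \<Rightarrow> 'g ncpoly \<Rightarrow> 'h ncpoly" where
  "subst \<sigma> f = (\<Sum>w\<in>Poly_Mapping.keys f. scal (Poly_Mapping.lookup f w) * prod_list (map \<sigma> (letters w)))"

text \<open>The subalgebra C<X> of C<g> generated by a subset X of letters
(elements supported on words all of whose letters lie in X).\<close>
definition free_on :: "'g set \<Rightarrow> 'g ncpoly set" where
  "free_on X = {f. \<forall>w\<in>Poly_Mapping.keys f. set (letters w) \<subseteq> X}"

text \<open>Two-sided ideal generated by a set (scalars are ring elements, so it is
automatically a C-subspace).\<close>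
inductive_set two_sided_ideal :: "'a::ring_1 set \<Rightarrow> 'a set" for S where
  zero: "0 \<in> two_sided_ideal S"
| gen: "s \<in> S \<Longrightarrow> a * s * b \<in> two_sided_ideal S"
| add: "x \<in> two_sided_ideal S \<Longrightarrow> y \<in> two_sided_ideal S \<Longrightarrow> x + y \<in> two_sided_ideal S"

datatype gen = Gk | Gl | Gm | Gn | Gp | Gq | Gr | Gs | Gt

text \<open>Indices 0..8 stand for e_i (x) e_j with n = 3 i + j (i,j in 0..2).\<close>

definition Tmat :: "nat \<Rightarrow> nat \<Rightarrow> gen ncpoly" where
  "Tmat i j = var ([[Gk, Gp, Gl], [Gq, Gr, Gs], [Gm, Gt, Gn]] ! i ! j)"

definition T1 :: "nat \<Rightarrow> nat \<Rightarrow> gen ncpoly" where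
  "T1 a b = (if a mod 3 = b mod 3 then Tmat (a div 3) (b div 3) else 0)"

definition T2 :: "nat \<Rightarrow> nat \<Rightarrow> gen ncpoly" where
  "T2 a b = (if a div 3 = b div 3 then Tmat (a mod 3) (b mod 3) else 0)"

definition Rhat :: "complex \<Rightarrow> complex \<Rightarrow> complex \<Rightarrow> nat \<Rightarrow> nat \<Rightarrow> complex" where
  "Rhat ea eb ec n m =
     (if n = m then [1/2, 1/2, 1/2, 1/2, 1, 1/2, 1/2, 1/2, 1/2] ! n
      else if n + m = 8 then [ea/2, eb/2, ea/2, ec/2, 0, ec/2, ea/2, eb/2, ea/2] ! n
      else 0)"

definition Pflip :: "nat \<Rightarrow> nat \<Rightarrow> complex" where
  "Pflip a b = (if a div 3 = b mod 3 \<and> a mod 3 = b div 3 then 1 else 0)"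

definition Rmat :: "complex \<Rightarrow> complex \<Rightarrow> complex \<Rightarrow> nat \<Rightarrow> nat \<Rightarrow> gen ncpoly" where
  "Rmat ea eb ec a b = scal (\<Sum>c<9. Pflip a c * Rhat ea eb ec c b)"

definition mmul :: "(nat \<Rightarrow> nat \<Rightarrow> 'a::semiring_0) \<Rightarrow> (nat \<Rightarrow> nat \<Rightarrow> 'a) \<Rightarrow> nat \<Rightarrow> nat \<Rightarrow> 'a" where
  "mmul A B a b = (\<Sum>c<9. A a c * B c b)"

text \<open>The 81 entries of R T1 T2 - T2 T1 R; A_{ea eb ec} = C<gen> / (these).\<close>
definition rtt_rels :: "complex \<Rightarrow> complex \<Rightarrow> complex \<Rightarrow> gen ncpoly set" where
  "rtt_rels ea eb ec =
     {mmul (mmul (Rmat ea eb ec) T1) T2 a b - mmul (mmul T2 T1) (Rmat ea eb ec) a b | a b. a < 9 \<and> b < 9}"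

definition kt :: "gen ncpoly" where "kt = scal (1/2) * (var Gk + var Gn)"
definition nt :: "gen ncpoly" where "nt = scal (1/2) * (var Gk - var Gn)"
definition lt :: "gen ncpoly" where "lt = scal (1/2) * (var Gl + var Gm)"
definition mt :: "gen ncpoly" where "mt = scal (1/2) * (var Gl - var Gm)"
definition pt :: "gen ncpoly" where "pt = scal (1/2) * (var Gp + var Gt)"
definition tt :: "gen ncpoly" where "tt = scal (1/2) * (var Gp - var Gt)"
definition qt :: "gen ncpoly" where "qt = scal (1/2) * (var Gq + var Gs)"
definition st :: "gen ncpoly" where "st = scal (1/2) * (var Gq - var Gs)"

definition X1 :: "gen ncpoly set" where "X1 = {kt, lt, pt, qt, var Gr}"
definition X2 :: "gen ncpoly set" where "X2 = {mt, nt, st, tt}"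

definition forty_rels :: "gen ncpoly set" where
  "forty_rels = {x * y | x y. x \<in> X1 \<and> y \<in> X2} \<union> {y * x | x y. x \<in> X1 \<and> y \<in> X2}"

text \<open>Abstract letters for the new generators; C<X1> and C<X2> are realised as the
subalgebras of C<tgen> on the letters of X1 resp. X2.\<close>
datatype tgen = Tk | Tl | Tp | Tq | Tr | Tm | Tn | Ts | Tt

definition TX1 :: "tgen set" where "TX1 = {Tk, Tl, Tp, Tq, Tr}"
definition TX2 :: "tgen set" where "TX2 = {Tm, Tn, Ts, Tt}"

definition fibre_product :: "(tgen ncpoly \<times> tgen ncpoly) set" where
  "fibre_product = {(f, g). f \<in> free_on TX1 \<and> g \<in> free_on TX2 \<and> const_term f = const_term g}"

text \<open>The natural maps C<gen> -> C<X1>, C<X2>: on new generators they send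
x in X1 to its letter (X2 to 0), resp. y in X2 to its letter (X1 to 0).
In terms of old generators, k = kt + nt, n = kt - nt, l = lt + mt, m = lt - mt,
p = pt + tt, t = pt - tt, q = qt + st, s = qt - st.\<close>
fun sigma1 :: "gen \<Rightarrow> tgen ncpoly" where
  "sigma1 Gk = var Tk" | "sigma1 Gn = var Tk"
| "sigma1 Gl = var Tl" | "sigma1 Gm = var Tl"
| "sigma1 Gp = var Tp" | "sigma1 Gt = var Tp"
| "sigma1 Gq = var Tq" | "sigma1 Gs = var Tq"
| "sigma1 Gr = var Tr"

fun sigma2 :: "gen \<Rightarrow> tgen ncpoly" where
  "sigma2 Gk = var Tn" | "sigma2 Gn = - var Tn"
| "sigma2 Gl = var Tm" | "sigma2 Gm = - var Tm"
| "sigma2 Gp = var Tt" | "sigma2 Gt = - var Tt"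
| "sigma2 Gq = var Ts" | "sigma2 Gs = - var Ts"
| "sigma2 Gr = 0"

end

theory Submission
  imports Defs
begin


lemma pm_expand: "(f::'a::monoid_add \<Rightarrow>\<^sub>0 'b::comm_monoid_add) = (\<Sum>w\<in>Poly_Mapping.keys f. Poly_Mapping.single w (Poly_Mapping.lookup f w))"
  by (rule poly_mapping_eqI) (auto simp: lookup_sum lookup_single when_def in_keys_iff)

lemma pm_induct[case_names zero single add]:
  assumes "P 0" "\<And>w c. P (Poly_Mapping.single w c)" "\<And>a b. P a \<Longrightarrow> P b \<Longrightarrow> P (a + b)"
  shows "P (f::'a \<Rightarrow>\<^sub>0 'b::comm_monoid_add)"
proof -
  have "P (\<Sum>w\<in>I. Poly_Mapping.single w (Poly_Mapping.lookup f w))" if "finite I" for I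
    using that by (induction I rule: finite_induct) (auto intro: assms)
  then have "P (\<Sum>w\<in>Poly_Mapping.keys f. Poly_Mapping.single w (Poly_Mapping.lookup f w))" by simp
  moreover have "f = (\<Sum>w\<in>Poly_Mapping.keys f. Poly_Mapping.single w (Poly_Mapping.lookup f w))"
    by (rule poly_mapping_eqI) (auto simp: lookup_sum lookup_single when_def in_keys_iff)
  ultimately show ?thesis by simp
qed

lemma scal_0[simp]: "scal 0 = 0" by (simp add: scal_def)
lemma scal_1[simp]: "scal 1 = 1" by (simp add: scal_def)
lemma scal_add: "scal (a + b) = scal a + scal b" by (simp add: scal_def single_add)
lemma scal_diff: "scal (a - b) = scal a - scal b" by (simp add: scal_def single_diff)
lemma scal_uminus: "scal (- a) = - scal a" by (simp add: scal_def single_uminus)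
lemma scal_mult: "scal (a * b) = scal a * scal b" by (simp add: scal_def mult_single)

lemma scal_single: "scal c * Poly_Mapping.single w d = Poly_Mapping.single w (c * d)"
  by (simp add: scal_def mult_single)
lemma single_scal: "Poly_Mapping.single w d * scal c = Poly_Mapping.single w (d * c)"
  by (simp add: scal_def mult_single)

lemma scal_comm: "scal c * (f::'g ncpoly) = f * scal c"
  by (induction f rule: pm_induct) (auto simp: scal_single single_scal distrib_left distrib_right mult.commute)

lemma lookup_scal_mult: "Poly_Mapping.lookup (scal c * (f::'g ncpoly)) w = c * Poly_Mapping.lookup f w"
  by (induction f rule: pm_induct) (auto simp: scal_single lookup_single when_def distrib_left lookup_add)

definition mon :: "('g \<Rightarrow> 'h ncpoly) \<Rightarrow> 'g word \<Rightarrow> 'h ncpoly" where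
  "mon \<sigma> w = prod_list (map \<sigma> (letters w))"

lemma subst_superset:
  assumes "finite S" "Poly_Mapping.keys f \<subseteq> S"
  shows "subst \<sigma> f = (\<Sum>w\<in>S. scal (Poly_Mapping.lookup f w) * mon \<sigma> w)"
  unfolding subst_def mon_def
  by (rule sum.mono_neutral_left) (use assms in \<open>auto simp: in_keys_iff\<close>)

lemma subst_add: "subst \<sigma> (f + g) = subst \<sigma> f + subst \<sigma> g"
proof -
  let ?S = "Poly_Mapping.keys f \<union> Poly_Mapping.keys g"
  have "subst \<sigma> (f + g) = (\<Sum>w\<in>?S. scal (Poly_Mapping.lookup (f+g) w) * mon \<sigma> w)"
    by (rule subst_superset) (auto dest: subsetD[OF keys_add])
  also have "\<dots> = (\<Sum>w\<in>?S. scal (Poly_Mapping.lookup f w) * mon \<sigma> w) + (\<Sum>w\<in>?S. scal (Poly_Mapping.lookup g w) * mon \<sigma> w)"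
    by (simp add: lookup_add scal_add distrib_right sum.distrib)
  also have "\<dots> = subst \<sigma> f + subst \<sigma> g"
    by (simp add: subst_superset[symmetric])
  finally show ?thesis .
qed

lemma subst_0[simp]: "subst \<sigma> 0 = 0" by (simp add: subst_def)

lemma subst_single: "subst \<sigma> (Poly_Mapping.single w c) = scal c * mon \<sigma> w"
  by (simp add: subst_def mon_def)

lemma subst_uminus: "subst \<sigma> (- f) = - subst \<sigma> f"
  by (metis add_eq_0_iff2 subst_0 subst_add add.right_inverse)
lemma subst_diff: "subst \<sigma> (f - g) = subst \<sigma> f - subst \<sigma> g"
  by (metis diff_conv_add_uminus subst_add subst_uminus)

lemma mon_add: "mon \<sigma> (u + v) = mon \<sigma> u * mon \<sigma> v"
  by (simp add: mon_def plus_word_def)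
lemma mon_0[simp]: "mon \<sigma> 0 = 1"
  by (simp add: mon_def zero_word_def)

lemma subst_mult_single: "subst \<sigma> (Poly_Mapping.single u a * Poly_Mapping.single v b) = subst \<sigma> (Poly_Mapping.single u a) * subst \<sigma> (Poly_Mapping.single v b)"
  by (simp add: mult_single subst_single mon_add scal_mult mult.assoc)
     (metis mult.assoc scal_comm)

lemma subst_mult: "subst \<sigma> (f * g) = subst \<sigma> f * subst \<sigma> g"
proof (induction f rule: pm_induct)
  case (single u a)
  show ?case
    by (induction g rule: pm_induct) (auto simp: subst_mult_single subst_add distrib_left)
qed (auto simp: subst_add distrib_right)

lemma subst_scal[simp]: "subst \<sigma> (scal c) = scal c"
  by (simp add: scal_def subst_single)
lemma subst_one[simp]: "subst \<sigma> 1 = 1"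
  using subst_scal[of \<sigma> 1] by simp
lemma subst_var[simp]: "subst \<sigma> (var g) = \<sigma> g"
  by (simp add: var_def subst_single mon_def)

lemma subst_prod_list: "subst \<sigma> (prod_list xs) = prod_list (map (subst \<sigma>) xs)"
  by (induction xs) (auto simp: subst_mult)

lemma single_Nil[simp]: "Poly_Mapping.single (Word []) (1::complex) = 1"
  by (metis single_one zero_word_def)

lemma mon_var: "mon var w = Poly_Mapping.single w 1"
proof -
  have "prod_list (map var xs) = Poly_Mapping.single (Word xs) 1" for xs :: "'g list"
    by (induction xs) (auto simp: var_def mult_single plus_word_def zero_word_def)
  then show ?thesis by (cases w) (simp add: mon_def)
qed

lemma subst_var_id[simp]: "subst var f = f"
  by (induction f rule: pm_induct) (auto simp: subst_add subst_single mon_var scal_single)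

lemma subst_comp: "subst \<tau> (subst \<rho> f) = subst (\<lambda>g. subst \<tau> (\<rho> g)) f"
  by (induction f rule: pm_induct)
     (auto simp: subst_add subst_single subst_mult mon_def subst_prod_list o_def)




lemma Pflip_sum: "a < 9 \<Longrightarrow> (\<Sum>c<9. Pflip a c * X c) = (X (3*(a mod 3) + a div 3) :: complex)"
proof -
  assume a: "a < 9"
  have lt: "3*(a mod 3) + a div 3 < 9" using a by linarith
  have "(\<Sum>c<9. Pflip a c * X c) = (\<Sum>c<9. if c = 3*(a mod 3) + a div 3 then X c else 0)"
    apply (rule sum.cong, simp)
    using a unfolding Pflip_def by auto
  also have "\<dots> = X (3*(a mod 3) + a div 3)" using lt by (simp add: sum.delta)
  finally show ?thesis .
qed

lemma Rmat_eq: "a < 9 \<Longrightarrow> Rmat 1 1 1 a b = scal (Rhat 1 1 1 (3*(a mod 3) + a div 3) b)"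
  by (simp add: Rmat_def Pflip_sum)

definition rel :: "nat \<Rightarrow> nat \<Rightarrow> gen ncpoly" where
  "rel a b = mmul (mmul (Rmat 1 1 1) T1) T2 a b - mmul (mmul T2 T1) (Rmat 1 1 1) a b"

fun ginv :: "gen \<Rightarrow> gen" where
  "ginv Gk = Gn" | "ginv Gn = Gk" | "ginv Gl = Gm" | "ginv Gm = Gl" | "ginv Gp = Gt" | "ginv Gt = Gp"
| "ginv Gq = Gs" | "ginv Gs = Gq" | "ginv Gr = Gr"

definition Dh :: "gen \<Rightarrow> gen \<Rightarrow> gen ncpoly" where
  "Dh g h = scal (1/2) * var g * var h - scal (1/2) * var (ginv g) * var (ginv h)"

lemma sum9: "(\<Sum>c<9. (f::nat\<Rightarrow>_) c) = f 0 + f 1 + f 2 + f 3 + f 4 + f 5 + f 6 + f 7 + (f 8 :: 'a::comm_monoid_add)"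
  by (simp add: eval_nat_numeral sum.lessThan_Suc)

lemma lk: "Poly_Mapping.lookup (scal c * var g * var h) w = (if w = Word [g,h] then c else 0)"
   "Poly_Mapping.lookup (var g * var h * scal c) w = (if w = Word [g,h] then c else 0)"
   "Poly_Mapping.lookup (var g * var h) w = (if w = Word [g,h] then 1 else 0)"
  by (auto simp: scal_def var_def mult_single plus_word_def zero_word_def lookup_single when_def)

lemma rel_0_0: "rel 0 0 = Dh Gm Gm"
  unfolding rel_def mmul_def Dh_def ginv.simps
  apply (simp add: sum9 Rmat_eq T1_def T2_def Tmat_def Rhat_def sum_distrib_right)
  apply (rule poly_mapping_eqI)
  apply (simp add: lookup_add lookup_minus lk mult.assoc[symmetric] distrib_left distrib_right)
  done

lemma rel_0_1: "rel 0 1 = Dh Gm Gt"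
  unfolding rel_def mmul_def Dh_def ginv.simps
  apply (simp add: sum9 Rmat_eq T1_def T2_def Tmat_def Rhat_def sum_distrib_right)
  apply (rule poly_mapping_eqI)
  apply (simp add: lookup_add lookup_minus lk mult.assoc[symmetric] distrib_left distrib_right)
  done

lemma rel_0_2: "rel 0 2 = Dh Gm Gn"
  unfolding rel_def mmul_def Dh_def ginv.simps
  apply (simp add: sum9 Rmat_eq T1_def T2_def Tmat_def Rhat_def sum_distrib_right)
  apply (rule poly_mapping_eqI)
  apply (simp add: lookup_add lookup_minus lk mult.assoc[symmetric] distrib_left distrib_right)
  done

lemma rel_0_3: "rel 0 3 = Dh Gt Gm"
  unfolding rel_def mmul_def Dh_def ginv.simps
  apply (simp add: sum9 Rmat_eq T1_def T2_def Tmat_def Rhat_def sum_distrib_right)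
  apply (rule poly_mapping_eqI)
  apply (simp add: lookup_add lookup_minus lk mult.assoc[symmetric] distrib_left distrib_right)
  done

lemma rel_0_4: "rel 0 4 = Dh Gt Gt"
  unfolding rel_def mmul_def Dh_def ginv.simps
  apply (simp add: sum9 Rmat_eq T1_def T2_def Tmat_def Rhat_def sum_distrib_right)
  apply (rule poly_mapping_eqI)
  apply (simp add: lookup_add lookup_minus lk mult.assoc[symmetric] distrib_left distrib_right)
  done

lemma rel_0_5: "rel 0 5 = Dh Gt Gn"
  unfolding rel_def mmul_def Dh_def ginv.simps
  apply (simp add: sum9 Rmat_eq T1_def T2_def Tmat_def Rhat_def sum_distrib_right)
  apply (rule poly_mapping_eqI)
  apply (simp add: lookup_add lookup_minus lk mult.assoc[symmetric] distrib_left distrib_right)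
  done

lemma rel_0_6: "rel 0 6 = Dh Gn Gm"
  unfolding rel_def mmul_def Dh_def ginv.simps
  apply (simp add: sum9 Rmat_eq T1_def T2_def Tmat_def Rhat_def sum_distrib_right)
  apply (rule poly_mapping_eqI)
  apply (simp add: lookup_add lookup_minus lk mult.assoc[symmetric] distrib_left distrib_right)
  done

lemma rel_0_7: "rel 0 7 = Dh Gn Gt"
  unfolding rel_def mmul_def Dh_def ginv.simps
  apply (simp add: sum9 Rmat_eq T1_def T2_def Tmat_def Rhat_def sum_distrib_right)
  apply (rule poly_mapping_eqI)
  apply (simp add: lookup_add lookup_minus lk mult.assoc[symmetric] distrib_left distrib_right)
  done

lemma rel_0_8: "rel 0 8 = Dh Gn Gn"
  unfolding rel_def mmul_def Dh_def ginv.simps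
  apply (simp add: sum9 Rmat_eq T1_def T2_def Tmat_def Rhat_def sum_distrib_right)
  apply (rule poly_mapping_eqI)
  apply (simp add: lookup_add lookup_minus lk mult.assoc[symmetric] distrib_left distrib_right)
  done

lemma rel_1_0: "rel 1 0 = Dh Gq Gm"
  unfolding rel_def mmul_def Dh_def ginv.simps
  apply (simp add: sum9 Rmat_eq T1_def T2_def Tmat_def Rhat_def sum_distrib_right)
  apply (rule poly_mapping_eqI)
  apply (simp add: lookup_add lookup_minus lk mult.assoc[symmetric] distrib_left distrib_right)
  done

lemma rel_1_1: "rel 1 1 = Dh Gq Gt"
  unfolding rel_def mmul_def Dh_def ginv.simps
  apply (simp add: sum9 Rmat_eq T1_def T2_def Tmat_def Rhat_def sum_distrib_right)
  apply (rule poly_mapping_eqI)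
  apply (simp add: lookup_add lookup_minus lk mult.assoc[symmetric] distrib_left distrib_right)
  done

lemma rel_1_2: "rel 1 2 = Dh Gq Gn"
  unfolding rel_def mmul_def Dh_def ginv.simps
  apply (simp add: sum9 Rmat_eq T1_def T2_def Tmat_def Rhat_def sum_distrib_right)
  apply (rule poly_mapping_eqI)
  apply (simp add: lookup_add lookup_minus lk mult.assoc[symmetric] distrib_left distrib_right)
  done

lemma rel_1_3: "rel 1 3 = Dh Gr Gm"
  unfolding rel_def mmul_def Dh_def ginv.simps
  apply (simp add: sum9 Rmat_eq T1_def T2_def Tmat_def Rhat_def sum_distrib_right)
  apply (rule poly_mapping_eqI)
  apply (simp add: lookup_add lookup_minus lk mult.assoc[symmetric] distrib_left distrib_right)
  done

lemma rel_1_4: "rel 1 4 = Dh Gr Gt"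
  unfolding rel_def mmul_def Dh_def ginv.simps
  apply (simp add: sum9 Rmat_eq T1_def T2_def Tmat_def Rhat_def sum_distrib_right)
  apply (rule poly_mapping_eqI)
  apply (simp add: lookup_add lookup_minus lk mult.assoc[symmetric] distrib_left distrib_right)
  done

lemma rel_1_5: "rel 1 5 = Dh Gr Gn"
  unfolding rel_def mmul_def Dh_def ginv.simps
  apply (simp add: sum9 Rmat_eq T1_def T2_def Tmat_def Rhat_def sum_distrib_right)
  apply (rule poly_mapping_eqI)
  apply (simp add: lookup_add lookup_minus lk mult.assoc[symmetric] distrib_left distrib_right)
  done

lemma rel_1_6: "rel 1 6 = Dh Gs Gm"
  unfolding rel_def mmul_def Dh_def ginv.simps
  apply (simp add: sum9 Rmat_eq T1_def T2_def Tmat_def Rhat_def sum_distrib_right)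
  apply (rule poly_mapping_eqI)
  apply (simp add: lookup_add lookup_minus lk mult.assoc[symmetric] distrib_left distrib_right)
  done

lemma rel_1_7: "rel 1 7 = Dh Gs Gt"
  unfolding rel_def mmul_def Dh_def ginv.simps
  apply (simp add: sum9 Rmat_eq T1_def T2_def Tmat_def Rhat_def sum_distrib_right)
  apply (rule poly_mapping_eqI)
  apply (simp add: lookup_add lookup_minus lk mult.assoc[symmetric] distrib_left distrib_right)
  done

lemma rel_1_8: "rel 1 8 = Dh Gs Gn"
  unfolding rel_def mmul_def Dh_def ginv.simps
  apply (simp add: sum9 Rmat_eq T1_def T2_def Tmat_def Rhat_def sum_distrib_right)
  apply (rule poly_mapping_eqI)
  apply (simp add: lookup_add lookup_minus lk mult.assoc[symmetric] distrib_left distrib_right)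
  done

lemma rel_2_0: "rel 2 0 = Dh Gk Gm"
  unfolding rel_def mmul_def Dh_def ginv.simps
  apply (simp add: sum9 Rmat_eq T1_def T2_def Tmat_def Rhat_def sum_distrib_right)
  apply (rule poly_mapping_eqI)
  apply (simp add: lookup_add lookup_minus lk mult.assoc[symmetric] distrib_left distrib_right)
  done

lemma rel_2_1: "rel 2 1 = Dh Gk Gt"
  unfolding rel_def mmul_def Dh_def ginv.simps
  apply (simp add: sum9 Rmat_eq T1_def T2_def Tmat_def Rhat_def sum_distrib_right)
  apply (rule poly_mapping_eqI)
  apply (simp add: lookup_add lookup_minus lk mult.assoc[symmetric] distrib_left distrib_right)
  done

lemma rel_2_2: "rel 2 2 = Dh Gk Gn"
  unfolding rel_def mmul_def Dh_def ginv.simps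
  apply (simp add: sum9 Rmat_eq T1_def T2_def Tmat_def Rhat_def sum_distrib_right)
  apply (rule poly_mapping_eqI)
  apply (simp add: lookup_add lookup_minus lk mult.assoc[symmetric] distrib_left distrib_right)
  done

lemma rel_2_3: "rel 2 3 = Dh Gp Gm"
  unfolding rel_def mmul_def Dh_def ginv.simps
  apply (simp add: sum9 Rmat_eq T1_def T2_def Tmat_def Rhat_def sum_distrib_right)
  apply (rule poly_mapping_eqI)
  apply (simp add: lookup_add lookup_minus lk mult.assoc[symmetric] distrib_left distrib_right)
  done

lemma rel_2_4: "rel 2 4 = Dh Gp Gt"
  unfolding rel_def mmul_def Dh_def ginv.simps
  apply (simp add: sum9 Rmat_eq T1_def T2_def Tmat_def Rhat_def sum_distrib_right)
  apply (rule poly_mapping_eqI)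
  apply (simp add: lookup_add lookup_minus lk mult.assoc[symmetric] distrib_left distrib_right)
  done

lemma rel_2_5: "rel 2 5 = Dh Gp Gn"
  unfolding rel_def mmul_def Dh_def ginv.simps
  apply (simp add: sum9 Rmat_eq T1_def T2_def Tmat_def Rhat_def sum_distrib_right)
  apply (rule poly_mapping_eqI)
  apply (simp add: lookup_add lookup_minus lk mult.assoc[symmetric] distrib_left distrib_right)
  done

lemma rel_2_6: "rel 2 6 = Dh Gl Gm"
  unfolding rel_def mmul_def Dh_def ginv.simps
  apply (simp add: sum9 Rmat_eq T1_def T2_def Tmat_def Rhat_def sum_distrib_right)
  apply (rule poly_mapping_eqI)
  apply (simp add: lookup_add lookup_minus lk mult.assoc[symmetric] distrib_left distrib_right)
  done

lemma rel_2_7: "rel 2 7 = Dh Gl Gt"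
  unfolding rel_def mmul_def Dh_def ginv.simps
  apply (simp add: sum9 Rmat_eq T1_def T2_def Tmat_def Rhat_def sum_distrib_right)
  apply (rule poly_mapping_eqI)
  apply (simp add: lookup_add lookup_minus lk mult.assoc[symmetric] distrib_left distrib_right)
  done

lemma rel_2_8: "rel 2 8 = Dh Gl Gn"
  unfolding rel_def mmul_def Dh_def ginv.simps
  apply (simp add: sum9 Rmat_eq T1_def T2_def Tmat_def Rhat_def sum_distrib_right)
  apply (rule poly_mapping_eqI)
  apply (simp add: lookup_add lookup_minus lk mult.assoc[symmetric] distrib_left distrib_right)
  done

lemma rel_3_0: "rel 3 0 = Dh Gm Gq"
  unfolding rel_def mmul_def Dh_def ginv.simps
  apply (simp add: sum9 Rmat_eq T1_def T2_def Tmat_def Rhat_def sum_distrib_right)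
  apply (rule poly_mapping_eqI)
  apply (simp add: lookup_add lookup_minus lk mult.assoc[symmetric] distrib_left distrib_right)
  done

lemma rel_3_1: "rel 3 1 = Dh Gm Gr"
  unfolding rel_def mmul_def Dh_def ginv.simps
  apply (simp add: sum9 Rmat_eq T1_def T2_def Tmat_def Rhat_def sum_distrib_right)
  apply (rule poly_mapping_eqI)
  apply (simp add: lookup_add lookup_minus lk mult.assoc[symmetric] distrib_left distrib_right)
  done

lemma rel_3_2: "rel 3 2 = Dh Gm Gs"
  unfolding rel_def mmul_def Dh_def ginv.simps
  apply (simp add: sum9 Rmat_eq T1_def T2_def Tmat_def Rhat_def sum_distrib_right)
  apply (rule poly_mapping_eqI)
  apply (simp add: lookup_add lookup_minus lk mult.assoc[symmetric] distrib_left distrib_right)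
  done

lemma rel_3_3: "rel 3 3 = Dh Gt Gq"
  unfolding rel_def mmul_def Dh_def ginv.simps
  apply (simp add: sum9 Rmat_eq T1_def T2_def Tmat_def Rhat_def sum_distrib_right)
  apply (rule poly_mapping_eqI)
  apply (simp add: lookup_add lookup_minus lk mult.assoc[symmetric] distrib_left distrib_right)
  done

lemma rel_3_4: "rel 3 4 = Dh Gt Gr"
  unfolding rel_def mmul_def Dh_def ginv.simps
  apply (simp add: sum9 Rmat_eq T1_def T2_def Tmat_def Rhat_def sum_distrib_right)
  apply (rule poly_mapping_eqI)
  apply (simp add: lookup_add lookup_minus lk mult.assoc[symmetric] distrib_left distrib_right)
  done

lemma rel_3_5: "rel 3 5 = Dh Gt Gs"
  unfolding rel_def mmul_def Dh_def ginv.simps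
  apply (simp add: sum9 Rmat_eq T1_def T2_def Tmat_def Rhat_def sum_distrib_right)
  apply (rule poly_mapping_eqI)
  apply (simp add: lookup_add lookup_minus lk mult.assoc[symmetric] distrib_left distrib_right)
  done

lemma rel_3_6: "rel 3 6 = Dh Gn Gq"
  unfolding rel_def mmul_def Dh_def ginv.simps
  apply (simp add: sum9 Rmat_eq T1_def T2_def Tmat_def Rhat_def sum_distrib_right)
  apply (rule poly_mapping_eqI)
  apply (simp add: lookup_add lookup_minus lk mult.assoc[symmetric] distrib_left distrib_right)
  done

lemma rel_3_7: "rel 3 7 = Dh Gn Gr"
  unfolding rel_def mmul_def Dh_def ginv.simps
  apply (simp add: sum9 Rmat_eq T1_def T2_def Tmat_def Rhat_def sum_distrib_right)
  apply (rule poly_mapping_eqI)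
  apply (simp add: lookup_add lookup_minus lk mult.assoc[symmetric] distrib_left distrib_right)
  done

lemma rel_3_8: "rel 3 8 = Dh Gn Gs"
  unfolding rel_def mmul_def Dh_def ginv.simps
  apply (simp add: sum9 Rmat_eq T1_def T2_def Tmat_def Rhat_def sum_distrib_right)
  apply (rule poly_mapping_eqI)
  apply (simp add: lookup_add lookup_minus lk mult.assoc[symmetric] distrib_left distrib_right)
  done

lemma rel_4_0: "rel 4 0 = Dh Gq Gq"
  unfolding rel_def mmul_def Dh_def ginv.simps
  apply (simp add: sum9 Rmat_eq T1_def T2_def Tmat_def Rhat_def sum_distrib_right)
  apply (rule poly_mapping_eqI)
  apply (simp add: lookup_add lookup_minus lk mult.assoc[symmetric] distrib_left distrib_right)
  done

lemma rel_4_1: "rel 4 1 = Dh Gq Gr"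
  unfolding rel_def mmul_def Dh_def ginv.simps
  apply (simp add: sum9 Rmat_eq T1_def T2_def Tmat_def Rhat_def sum_distrib_right)
  apply (rule poly_mapping_eqI)
  apply (simp add: lookup_add lookup_minus lk mult.assoc[symmetric] distrib_left distrib_right)
  done

lemma rel_4_2: "rel 4 2 = Dh Gq Gs"
  unfolding rel_def mmul_def Dh_def ginv.simps
  apply (simp add: sum9 Rmat_eq T1_def T2_def Tmat_def Rhat_def sum_distrib_right)
  apply (rule poly_mapping_eqI)
  apply (simp add: lookup_add lookup_minus lk mult.assoc[symmetric] distrib_left distrib_right)
  done

lemma rel_4_3: "rel 4 3 = Dh Gr Gq"
  unfolding rel_def mmul_def Dh_def ginv.simps
  apply (simp add: sum9 Rmat_eq T1_def T2_def Tmat_def Rhat_def sum_distrib_right)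
  apply (rule poly_mapping_eqI)
  apply (simp add: lookup_add lookup_minus lk mult.assoc[symmetric] distrib_left distrib_right)
  done

lemma rel_4_4: "rel 4 4 = Dh Gr Gr"
  unfolding rel_def mmul_def Dh_def ginv.simps
  apply (simp add: sum9 Rmat_eq T1_def T2_def Tmat_def Rhat_def sum_distrib_right)
  done

lemma rel_4_5: "rel 4 5 = Dh Gr Gs"
  unfolding rel_def mmul_def Dh_def ginv.simps
  apply (simp add: sum9 Rmat_eq T1_def T2_def Tmat_def Rhat_def sum_distrib_right)
  apply (rule poly_mapping_eqI)
  apply (simp add: lookup_add lookup_minus lk mult.assoc[symmetric] distrib_left distrib_right)
  done

lemma rel_4_6: "rel 4 6 = Dh Gs Gq"
  unfolding rel_def mmul_def Dh_def ginv.simps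
  apply (simp add: sum9 Rmat_eq T1_def T2_def Tmat_def Rhat_def sum_distrib_right)
  apply (rule poly_mapping_eqI)
  apply (simp add: lookup_add lookup_minus lk mult.assoc[symmetric] distrib_left distrib_right)
  done

lemma rel_4_7: "rel 4 7 = Dh Gs Gr"
  unfolding rel_def mmul_def Dh_def ginv.simps
  apply (simp add: sum9 Rmat_eq T1_def T2_def Tmat_def Rhat_def sum_distrib_right)
  apply (rule poly_mapping_eqI)
  apply (simp add: lookup_add lookup_minus lk mult.assoc[symmetric] distrib_left distrib_right)
  done

lemma rel_4_8: "rel 4 8 = Dh Gs Gs"
  unfolding rel_def mmul_def Dh_def ginv.simps
  apply (simp add: sum9 Rmat_eq T1_def T2_def Tmat_def Rhat_def sum_distrib_right)
  apply (rule poly_mapping_eqI)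
  apply (simp add: lookup_add lookup_minus lk mult.assoc[symmetric] distrib_left distrib_right)
  done

lemma rel_5_0: "rel 5 0 = Dh Gk Gq"
  unfolding rel_def mmul_def Dh_def ginv.simps
  apply (simp add: sum9 Rmat_eq T1_def T2_def Tmat_def Rhat_def sum_distrib_right)
  apply (rule poly_mapping_eqI)
  apply (simp add: lookup_add lookup_minus lk mult.assoc[symmetric] distrib_left distrib_right)
  done

lemma rel_5_1: "rel 5 1 = Dh Gk Gr"
  unfolding rel_def mmul_def Dh_def ginv.simps
  apply (simp add: sum9 Rmat_eq T1_def T2_def Tmat_def Rhat_def sum_distrib_right)
  apply (rule poly_mapping_eqI)
  apply (simp add: lookup_add lookup_minus lk mult.assoc[symmetric] distrib_left distrib_right)
  done

lemma rel_5_2: "rel 5 2 = Dh Gk Gs"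
  unfolding rel_def mmul_def Dh_def ginv.simps
  apply (simp add: sum9 Rmat_eq T1_def T2_def Tmat_def Rhat_def sum_distrib_right)
  apply (rule poly_mapping_eqI)
  apply (simp add: lookup_add lookup_minus lk mult.assoc[symmetric] distrib_left distrib_right)
  done

lemma rel_5_3: "rel 5 3 = Dh Gp Gq"
  unfolding rel_def mmul_def Dh_def ginv.simps
  apply (simp add: sum9 Rmat_eq T1_def T2_def Tmat_def Rhat_def sum_distrib_right)
  apply (rule poly_mapping_eqI)
  apply (simp add: lookup_add lookup_minus lk mult.assoc[symmetric] distrib_left distrib_right)
  done

lemma rel_5_4: "rel 5 4 = Dh Gp Gr"
  unfolding rel_def mmul_def Dh_def ginv.simps
  apply (simp add: sum9 Rmat_eq T1_def T2_def Tmat_def Rhat_def sum_distrib_right)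
  apply (rule poly_mapping_eqI)
  apply (simp add: lookup_add lookup_minus lk mult.assoc[symmetric] distrib_left distrib_right)
  done

lemma rel_5_5: "rel 5 5 = Dh Gp Gs"
  unfolding rel_def mmul_def Dh_def ginv.simps
  apply (simp add: sum9 Rmat_eq T1_def T2_def Tmat_def Rhat_def sum_distrib_right)
  apply (rule poly_mapping_eqI)
  apply (simp add: lookup_add lookup_minus lk mult.assoc[symmetric] distrib_left distrib_right)
  done

lemma rel_5_6: "rel 5 6 = Dh Gl Gq"
  unfolding rel_def mmul_def Dh_def ginv.simps
  apply (simp add: sum9 Rmat_eq T1_def T2_def Tmat_def Rhat_def sum_distrib_right)
  apply (rule poly_mapping_eqI)
  apply (simp add: lookup_add lookup_minus lk mult.assoc[symmetric] distrib_left distrib_right)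
  done

lemma rel_5_7: "rel 5 7 = Dh Gl Gr"
  unfolding rel_def mmul_def Dh_def ginv.simps
  apply (simp add: sum9 Rmat_eq T1_def T2_def Tmat_def Rhat_def sum_distrib_right)
  apply (rule poly_mapping_eqI)
  apply (simp add: lookup_add lookup_minus lk mult.assoc[symmetric] distrib_left distrib_right)
  done

lemma rel_5_8: "rel 5 8 = Dh Gl Gs"
  unfolding rel_def mmul_def Dh_def ginv.simps
  apply (simp add: sum9 Rmat_eq T1_def T2_def Tmat_def Rhat_def sum_distrib_right)
  apply (rule poly_mapping_eqI)
  apply (simp add: lookup_add lookup_minus lk mult.assoc[symmetric] distrib_left distrib_right)
  done

lemma rel_6_0: "rel 6 0 = Dh Gm Gk"
  unfolding rel_def mmul_def Dh_def ginv.simps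
  apply (simp add: sum9 Rmat_eq T1_def T2_def Tmat_def Rhat_def sum_distrib_right)
  apply (rule poly_mapping_eqI)
  apply (simp add: lookup_add lookup_minus lk mult.assoc[symmetric] distrib_left distrib_right)
  done

lemma rel_6_1: "rel 6 1 = Dh Gm Gp"
  unfolding rel_def mmul_def Dh_def ginv.simps
  apply (simp add: sum9 Rmat_eq T1_def T2_def Tmat_def Rhat_def sum_distrib_right)
  apply (rule poly_mapping_eqI)
  apply (simp add: lookup_add lookup_minus lk mult.assoc[symmetric] distrib_left distrib_right)
  done

lemma rel_6_2: "rel 6 2 = Dh Gm Gl"
  unfolding rel_def mmul_def Dh_def ginv.simps
  apply (simp add: sum9 Rmat_eq T1_def T2_def Tmat_def Rhat_def sum_distrib_right)
  apply (rule poly_mapping_eqI)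
  apply (simp add: lookup_add lookup_minus lk mult.assoc[symmetric] distrib_left distrib_right)
  done

lemma rel_6_3: "rel 6 3 = Dh Gt Gk"
  unfolding rel_def mmul_def Dh_def ginv.simps
  apply (simp add: sum9 Rmat_eq T1_def T2_def Tmat_def Rhat_def sum_distrib_right)
  apply (rule poly_mapping_eqI)
  apply (simp add: lookup_add lookup_minus lk mult.assoc[symmetric] distrib_left distrib_right)
  done

lemma rel_6_4: "rel 6 4 = Dh Gt Gp"
  unfolding rel_def mmul_def Dh_def ginv.simps
  apply (simp add: sum9 Rmat_eq T1_def T2_def Tmat_def Rhat_def sum_distrib_right)
  apply (rule poly_mapping_eqI)
  apply (simp add: lookup_add lookup_minus lk mult.assoc[symmetric] distrib_left distrib_right)
  done

lemma rel_6_5: "rel 6 5 = Dh Gt Gl"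
  unfolding rel_def mmul_def Dh_def ginv.simps
  apply (simp add: sum9 Rmat_eq T1_def T2_def Tmat_def Rhat_def sum_distrib_right)
  apply (rule poly_mapping_eqI)
  apply (simp add: lookup_add lookup_minus lk mult.assoc[symmetric] distrib_left distrib_right)
  done

lemma rel_6_6: "rel 6 6 = Dh Gn Gk"
  unfolding rel_def mmul_def Dh_def ginv.simps
  apply (simp add: sum9 Rmat_eq T1_def T2_def Tmat_def Rhat_def sum_distrib_right)
  apply (rule poly_mapping_eqI)
  apply (simp add: lookup_add lookup_minus lk mult.assoc[symmetric] distrib_left distrib_right)
  done

lemma rel_6_7: "rel 6 7 = Dh Gn Gp"
  unfolding rel_def mmul_def Dh_def ginv.simps
  apply (simp add: sum9 Rmat_eq T1_def T2_def Tmat_def Rhat_def sum_distrib_right)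
  apply (rule poly_mapping_eqI)
  apply (simp add: lookup_add lookup_minus lk mult.assoc[symmetric] distrib_left distrib_right)
  done

lemma rel_6_8: "rel 6 8 = Dh Gn Gl"
  unfolding rel_def mmul_def Dh_def ginv.simps
  apply (simp add: sum9 Rmat_eq T1_def T2_def Tmat_def Rhat_def sum_distrib_right)
  apply (rule poly_mapping_eqI)
  apply (simp add: lookup_add lookup_minus lk mult.assoc[symmetric] distrib_left distrib_right)
  done

lemma rel_7_0: "rel 7 0 = Dh Gq Gk"
  unfolding rel_def mmul_def Dh_def ginv.simps
  apply (simp add: sum9 Rmat_eq T1_def T2_def Tmat_def Rhat_def sum_distrib_right)
  apply (rule poly_mapping_eqI)
  apply (simp add: lookup_add lookup_minus lk mult.assoc[symmetric] distrib_left distrib_right)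
  done

lemma rel_7_1: "rel 7 1 = Dh Gq Gp"
  unfolding rel_def mmul_def Dh_def ginv.simps
  apply (simp add: sum9 Rmat_eq T1_def T2_def Tmat_def Rhat_def sum_distrib_right)
  apply (rule poly_mapping_eqI)
  apply (simp add: lookup_add lookup_minus lk mult.assoc[symmetric] distrib_left distrib_right)
  done

lemma rel_7_2: "rel 7 2 = Dh Gq Gl"
  unfolding rel_def mmul_def Dh_def ginv.simps
  apply (simp add: sum9 Rmat_eq T1_def T2_def Tmat_def Rhat_def sum_distrib_right)
  apply (rule poly_mapping_eqI)
  apply (simp add: lookup_add lookup_minus lk mult.assoc[symmetric] distrib_left distrib_right)
  done

lemma rel_7_3: "rel 7 3 = Dh Gr Gk"
  unfolding rel_def mmul_def Dh_def ginv.simps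
  apply (simp add: sum9 Rmat_eq T1_def T2_def Tmat_def Rhat_def sum_distrib_right)
  apply (rule poly_mapping_eqI)
  apply (simp add: lookup_add lookup_minus lk mult.assoc[symmetric] distrib_left distrib_right)
  done

lemma rel_7_4: "rel 7 4 = Dh Gr Gp"
  unfolding rel_def mmul_def Dh_def ginv.simps
  apply (simp add: sum9 Rmat_eq T1_def T2_def Tmat_def Rhat_def sum_distrib_right)
  apply (rule poly_mapping_eqI)
  apply (simp add: lookup_add lookup_minus lk mult.assoc[symmetric] distrib_left distrib_right)
  done

lemma rel_7_5: "rel 7 5 = Dh Gr Gl"
  unfolding rel_def mmul_def Dh_def ginv.simps
  apply (simp add: sum9 Rmat_eq T1_def T2_def Tmat_def Rhat_def sum_distrib_right)
  apply (rule poly_mapping_eqI)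
  apply (simp add: lookup_add lookup_minus lk mult.assoc[symmetric] distrib_left distrib_right)
  done

lemma rel_7_6: "rel 7 6 = Dh Gs Gk"
  unfolding rel_def mmul_def Dh_def ginv.simps
  apply (simp add: sum9 Rmat_eq T1_def T2_def Tmat_def Rhat_def sum_distrib_right)
  apply (rule poly_mapping_eqI)
  apply (simp add: lookup_add lookup_minus lk mult.assoc[symmetric] distrib_left distrib_right)
  done

lemma rel_7_7: "rel 7 7 = Dh Gs Gp"
  unfolding rel_def mmul_def Dh_def ginv.simps
  apply (simp add: sum9 Rmat_eq T1_def T2_def Tmat_def Rhat_def sum_distrib_right)
  apply (rule poly_mapping_eqI)
  apply (simp add: lookup_add lookup_minus lk mult.assoc[symmetric] distrib_left distrib_right)
  done

lemma rel_7_8: "rel 7 8 = Dh Gs Gl"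
  unfolding rel_def mmul_def Dh_def ginv.simps
  apply (simp add: sum9 Rmat_eq T1_def T2_def Tmat_def Rhat_def sum_distrib_right)
  apply (rule poly_mapping_eqI)
  apply (simp add: lookup_add lookup_minus lk mult.assoc[symmetric] distrib_left distrib_right)
  done

lemma rel_8_0: "rel 8 0 = Dh Gk Gk"
  unfolding rel_def mmul_def Dh_def ginv.simps
  apply (simp add: sum9 Rmat_eq T1_def T2_def Tmat_def Rhat_def sum_distrib_right)
  apply (rule poly_mapping_eqI)
  apply (simp add: lookup_add lookup_minus lk mult.assoc[symmetric] distrib_left distrib_right)
  done

lemma rel_8_1: "rel 8 1 = Dh Gk Gp"
  unfolding rel_def mmul_def Dh_def ginv.simps
  apply (simp add: sum9 Rmat_eq T1_def T2_def Tmat_def Rhat_def sum_distrib_right)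
  apply (rule poly_mapping_eqI)
  apply (simp add: lookup_add lookup_minus lk mult.assoc[symmetric] distrib_left distrib_right)
  done

lemma rel_8_2: "rel 8 2 = Dh Gk Gl"
  unfolding rel_def mmul_def Dh_def ginv.simps
  apply (simp add: sum9 Rmat_eq T1_def T2_def Tmat_def Rhat_def sum_distrib_right)
  apply (rule poly_mapping_eqI)
  apply (simp add: lookup_add lookup_minus lk mult.assoc[symmetric] distrib_left distrib_right)
  done

lemma rel_8_3: "rel 8 3 = Dh Gp Gk"
  unfolding rel_def mmul_def Dh_def ginv.simps
  apply (simp add: sum9 Rmat_eq T1_def T2_def Tmat_def Rhat_def sum_distrib_right)
  apply (rule poly_mapping_eqI)
  apply (simp add: lookup_add lookup_minus lk mult.assoc[symmetric] distrib_left distrib_right)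
  done

lemma rel_8_4: "rel 8 4 = Dh Gp Gp"
  unfolding rel_def mmul_def Dh_def ginv.simps
  apply (simp add: sum9 Rmat_eq T1_def T2_def Tmat_def Rhat_def sum_distrib_right)
  apply (rule poly_mapping_eqI)
  apply (simp add: lookup_add lookup_minus lk mult.assoc[symmetric] distrib_left distrib_right)
  done

lemma rel_8_5: "rel 8 5 = Dh Gp Gl"
  unfolding rel_def mmul_def Dh_def ginv.simps
  apply (simp add: sum9 Rmat_eq T1_def T2_def Tmat_def Rhat_def sum_distrib_right)
  apply (rule poly_mapping_eqI)
  apply (simp add: lookup_add lookup_minus lk mult.assoc[symmetric] distrib_left distrib_right)
  done

lemma rel_8_6: "rel 8 6 = Dh Gl Gk"
  unfolding rel_def mmul_def Dh_def ginv.simps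
  apply (simp add: sum9 Rmat_eq T1_def T2_def Tmat_def Rhat_def sum_distrib_right)
  apply (rule poly_mapping_eqI)
  apply (simp add: lookup_add lookup_minus lk mult.assoc[symmetric] distrib_left distrib_right)
  done

lemma rel_8_7: "rel 8 7 = Dh Gl Gp"
  unfolding rel_def mmul_def Dh_def ginv.simps
  apply (simp add: sum9 Rmat_eq T1_def T2_def Tmat_def Rhat_def sum_distrib_right)
  apply (rule poly_mapping_eqI)
  apply (simp add: lookup_add lookup_minus lk mult.assoc[symmetric] distrib_left distrib_right)
  done

lemma rel_8_8: "rel 8 8 = Dh Gl Gl"
  unfolding rel_def mmul_def Dh_def ginv.simps
  apply (simp add: sum9 Rmat_eq T1_def T2_def Tmat_def Rhat_def sum_distrib_right)
  apply (rule poly_mapping_eqI)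
  apply (simp add: lookup_add lookup_minus lk mult.assoc[symmetric] distrib_left distrib_right)
  done

lemmas rel_tab = rel_0_0 rel_0_1 rel_0_2 rel_0_3 rel_0_4 rel_0_5 rel_0_6 rel_0_7 rel_0_8 rel_1_0 rel_1_1 rel_1_2 rel_1_3 rel_1_4 rel_1_5 rel_1_6 rel_1_7 rel_1_8 rel_2_0 rel_2_1 rel_2_2 rel_2_3 rel_2_4 rel_2_5 rel_2_6 rel_2_7 rel_2_8 rel_3_0 rel_3_1 rel_3_2 rel_3_3 rel_3_4 rel_3_5 rel_3_6 rel_3_7 rel_3_8 rel_4_0 rel_4_1 rel_4_2 rel_4_3 rel_4_4 rel_4_5 rel_4_6 rel_4_7 rel_4_8 rel_5_0 rel_5_1 rel_5_2 rel_5_3 rel_5_4 rel_5_5 rel_5_6 rel_5_7 rel_5_8 rel_6_0 rel_6_1 rel_6_2 rel_6_3 rel_6_4 rel_6_5 rel_6_6 rel_6_7 rel_6_8 rel_7_0 rel_7_1 rel_7_2 rel_7_3 rel_7_4 rel_7_5 rel_7_6 rel_7_7 rel_7_8 rel_8_0 rel_8_1 rel_8_2 rel_8_3 rel_8_4 rel_8_5 rel_8_6 rel_8_7 rel_8_8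




lemma rtt_eq: "rtt_rels 1 1 1 = {rel a b | a b. a < 9 \<and> b < 9}"
  unfolding rtt_rels_def rel_def by simp

lemma less9: "a < (9::nat) \<Longrightarrow> a = 0 \<or> a = 1 \<or> a = 2 \<or> a = 3 \<or> a = 4 \<or> a = 5 \<or> a = 6 \<or> a = 7 \<or> a = 8"
  by (simp add: numeral_eq_Suc less_Suc_eq)

lemma rel_form: "a < 9 \<Longrightarrow> b < 9 \<Longrightarrow> \<exists>g h. rel a b = Dh g h"
  by (drule less9, drule less9, elim disjE; simp only: rel_tab; blast)

lemma Dh_in: "Dh g h \<in> rtt_rels 1 1 1"
proof -
  have m: "a<9 \<Longrightarrow> b<9 \<Longrightarrow> rel a b \<in> rtt_rels 1 1 1" for a b unfolding rtt_eq by blast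
  have c_mm: "Dh Gm Gm \<in> rtt_rels 1 1 1" using m[of 0 0] rel_0_0 by simp
  have c_mt: "Dh Gm Gt \<in> rtt_rels 1 1 1" using m[of 0 1] rel_0_1 by simp
  have c_mn: "Dh Gm Gn \<in> rtt_rels 1 1 1" using m[of 0 2] rel_0_2 by simp
  have c_tm: "Dh Gt Gm \<in> rtt_rels 1 1 1" using m[of 0 3] rel_0_3 by simp
  have c_tt: "Dh Gt Gt \<in> rtt_rels 1 1 1" using m[of 0 4] rel_0_4 by simp
  have c_tn: "Dh Gt Gn \<in> rtt_rels 1 1 1" using m[of 0 5] rel_0_5 by simp
  have c_nm: "Dh Gn Gm \<in> rtt_rels 1 1 1" using m[of 0 6] rel_0_6 by simp
  have c_nt: "Dh Gn Gt \<in> rtt_rels 1 1 1" using m[of 0 7] rel_0_7 by simp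
  have c_nn: "Dh Gn Gn \<in> rtt_rels 1 1 1" using m[of 0 8] rel_0_8 by simp
  have c_qm: "Dh Gq Gm \<in> rtt_rels 1 1 1" using m[of 1 0] rel_1_0 by simp
  have c_qt: "Dh Gq Gt \<in> rtt_rels 1 1 1" using m[of 1 1] rel_1_1 by simp
  have c_qn: "Dh Gq Gn \<in> rtt_rels 1 1 1" using m[of 1 2] rel_1_2 by simp
  have c_rm: "Dh Gr Gm \<in> rtt_rels 1 1 1" using m[of 1 3] rel_1_3 by simp
  have c_rt: "Dh Gr Gt \<in> rtt_rels 1 1 1" using m[of 1 4] rel_1_4 by simp
  have c_rn: "Dh Gr Gn \<in> rtt_rels 1 1 1" using m[of 1 5] rel_1_5 by simp
  have c_sm: "Dh Gs Gm \<in> rtt_rels 1 1 1" using m[of 1 6] rel_1_6 by simp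
  have c_st: "Dh Gs Gt \<in> rtt_rels 1 1 1" using m[of 1 7] rel_1_7 by simp
  have c_sn: "Dh Gs Gn \<in> rtt_rels 1 1 1" using m[of 1 8] rel_1_8 by simp
  have c_km: "Dh Gk Gm \<in> rtt_rels 1 1 1" using m[of 2 0] rel_2_0 by simp
  have c_kt: "Dh Gk Gt \<in> rtt_rels 1 1 1" using m[of 2 1] rel_2_1 by simp
  have c_kn: "Dh Gk Gn \<in> rtt_rels 1 1 1" using m[of 2 2] rel_2_2 by simp
  have c_pm: "Dh Gp Gm \<in> rtt_rels 1 1 1" using m[of 2 3] rel_2_3 by simp
  have c_pt: "Dh Gp Gt \<in> rtt_rels 1 1 1" using m[of 2 4] rel_2_4 by simp
  have c_pn: "Dh Gp Gn \<in> rtt_rels 1 1 1" using m[of 2 5] rel_2_5 by simp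
  have c_lm: "Dh Gl Gm \<in> rtt_rels 1 1 1" using m[of 2 6] rel_2_6 by simp
  have c_lt: "Dh Gl Gt \<in> rtt_rels 1 1 1" using m[of 2 7] rel_2_7 by simp
  have c_ln: "Dh Gl Gn \<in> rtt_rels 1 1 1" using m[of 2 8] rel_2_8 by simp
  have c_mq: "Dh Gm Gq \<in> rtt_rels 1 1 1" using m[of 3 0] rel_3_0 by simp
  have c_mr: "Dh Gm Gr \<in> rtt_rels 1 1 1" using m[of 3 1] rel_3_1 by simp
  have c_ms: "Dh Gm Gs \<in> rtt_rels 1 1 1" using m[of 3 2] rel_3_2 by simp
  have c_tq: "Dh Gt Gq \<in> rtt_rels 1 1 1" using m[of 3 3] rel_3_3 by simp
  have c_tr: "Dh Gt Gr \<in> rtt_rels 1 1 1" using m[of 3 4] rel_3_4 by simp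
  have c_ts: "Dh Gt Gs \<in> rtt_rels 1 1 1" using m[of 3 5] rel_3_5 by simp
  have c_nq: "Dh Gn Gq \<in> rtt_rels 1 1 1" using m[of 3 6] rel_3_6 by simp
  have c_nr: "Dh Gn Gr \<in> rtt_rels 1 1 1" using m[of 3 7] rel_3_7 by simp
  have c_ns: "Dh Gn Gs \<in> rtt_rels 1 1 1" using m[of 3 8] rel_3_8 by simp
  have c_qq: "Dh Gq Gq \<in> rtt_rels 1 1 1" using m[of 4 0] rel_4_0 by simp
  have c_qr: "Dh Gq Gr \<in> rtt_rels 1 1 1" using m[of 4 1] rel_4_1 by simp
  have c_qs: "Dh Gq Gs \<in> rtt_rels 1 1 1" using m[of 4 2] rel_4_2 by simp
  have c_rq: "Dh Gr Gq \<in> rtt_rels 1 1 1" using m[of 4 3] rel_4_3 by simp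
  have c_rr: "Dh Gr Gr \<in> rtt_rels 1 1 1" using m[of 4 4] rel_4_4 by simp
  have c_rs: "Dh Gr Gs \<in> rtt_rels 1 1 1" using m[of 4 5] rel_4_5 by simp
  have c_sq: "Dh Gs Gq \<in> rtt_rels 1 1 1" using m[of 4 6] rel_4_6 by simp
  have c_sr: "Dh Gs Gr \<in> rtt_rels 1 1 1" using m[of 4 7] rel_4_7 by simp
  have c_ss: "Dh Gs Gs \<in> rtt_rels 1 1 1" using m[of 4 8] rel_4_8 by simp
  have c_kq: "Dh Gk Gq \<in> rtt_rels 1 1 1" using m[of 5 0] rel_5_0 by simp
  have c_kr: "Dh Gk Gr \<in> rtt_rels 1 1 1" using m[of 5 1] rel_5_1 by simp
  have c_ks: "Dh Gk Gs \<in> rtt_rels 1 1 1" using m[of 5 2] rel_5_2 by simp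
  have c_pq: "Dh Gp Gq \<in> rtt_rels 1 1 1" using m[of 5 3] rel_5_3 by simp
  have c_pr: "Dh Gp Gr \<in> rtt_rels 1 1 1" using m[of 5 4] rel_5_4 by simp
  have c_ps: "Dh Gp Gs \<in> rtt_rels 1 1 1" using m[of 5 5] rel_5_5 by simp
  have c_lq: "Dh Gl Gq \<in> rtt_rels 1 1 1" using m[of 5 6] rel_5_6 by simp
  have c_lr: "Dh Gl Gr \<in> rtt_rels 1 1 1" using m[of 5 7] rel_5_7 by simp
  have c_ls: "Dh Gl Gs \<in> rtt_rels 1 1 1" using m[of 5 8] rel_5_8 by simp
  have c_mk: "Dh Gm Gk \<in> rtt_rels 1 1 1" using m[of 6 0] rel_6_0 by simp
  have c_mp: "Dh Gm Gp \<in> rtt_rels 1 1 1" using m[of 6 1] rel_6_1 by simp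
  have c_ml: "Dh Gm Gl \<in> rtt_rels 1 1 1" using m[of 6 2] rel_6_2 by simp
  have c_tk: "Dh Gt Gk \<in> rtt_rels 1 1 1" using m[of 6 3] rel_6_3 by simp
  have c_tp: "Dh Gt Gp \<in> rtt_rels 1 1 1" using m[of 6 4] rel_6_4 by simp
  have c_tl: "Dh Gt Gl \<in> rtt_rels 1 1 1" using m[of 6 5] rel_6_5 by simp
  have c_nk: "Dh Gn Gk \<in> rtt_rels 1 1 1" using m[of 6 6] rel_6_6 by simp
  have c_np: "Dh Gn Gp \<in> rtt_rels 1 1 1" using m[of 6 7] rel_6_7 by simp
  have c_nl: "Dh Gn Gl \<in> rtt_rels 1 1 1" using m[of 6 8] rel_6_8 by simp
  have c_qk: "Dh Gq Gk \<in> rtt_rels 1 1 1" using m[of 7 0] rel_7_0 by simp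
  have c_qp: "Dh Gq Gp \<in> rtt_rels 1 1 1" using m[of 7 1] rel_7_1 by simp
  have c_ql: "Dh Gq Gl \<in> rtt_rels 1 1 1" using m[of 7 2] rel_7_2 by simp
  have c_rk: "Dh Gr Gk \<in> rtt_rels 1 1 1" using m[of 7 3] rel_7_3 by simp
  have c_rp: "Dh Gr Gp \<in> rtt_rels 1 1 1" using m[of 7 4] rel_7_4 by simp
  have c_rl: "Dh Gr Gl \<in> rtt_rels 1 1 1" using m[of 7 5] rel_7_5 by simp
  have c_sk: "Dh Gs Gk \<in> rtt_rels 1 1 1" using m[of 7 6] rel_7_6 by simp
  have c_sp: "Dh Gs Gp \<in> rtt_rels 1 1 1" using m[of 7 7] rel_7_7 by simp
  have c_sl: "Dh Gs Gl \<in> rtt_rels 1 1 1" using m[of 7 8] rel_7_8 by simp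
  have c_kk: "Dh Gk Gk \<in> rtt_rels 1 1 1" using m[of 8 0] rel_8_0 by simp
  have c_kp: "Dh Gk Gp \<in> rtt_rels 1 1 1" using m[of 8 1] rel_8_1 by simp
  have c_kl: "Dh Gk Gl \<in> rtt_rels 1 1 1" using m[of 8 2] rel_8_2 by simp
  have c_pk: "Dh Gp Gk \<in> rtt_rels 1 1 1" using m[of 8 3] rel_8_3 by simp
  have c_pp: "Dh Gp Gp \<in> rtt_rels 1 1 1" using m[of 8 4] rel_8_4 by simp
  have c_pl: "Dh Gp Gl \<in> rtt_rels 1 1 1" using m[of 8 5] rel_8_5 by simp
  have c_lk: "Dh Gl Gk \<in> rtt_rels 1 1 1" using m[of 8 6] rel_8_6 by simp
  have c_lp: "Dh Gl Gp \<in> rtt_rels 1 1 1" using m[of 8 7] rel_8_7 by simp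
  have c_ll: "Dh Gl Gl \<in> rtt_rels 1 1 1" using m[of 8 8] rel_8_8 by simp
  show ?thesis by (cases g; cases h) (simp_all only: c_mm c_mt c_mn c_tm c_tt c_tn c_nm c_nt c_nn c_qm c_qt c_qn c_rm c_rt c_rn c_sm c_st c_sn c_km c_kt c_kn c_pm c_pt c_pn c_lm c_lt c_ln c_mq c_mr c_ms c_tq c_tr c_ts c_nq c_nr c_ns c_qq c_qr c_qs c_rq c_rr c_rs c_sq c_sr c_ss c_kq c_kr c_ks c_pq c_pr c_ps c_lq c_lr c_ls c_mk c_mp c_ml c_tk c_tp c_tl c_nk c_np c_nl c_qk c_qp c_ql c_rk c_rp c_rl c_sk c_sp c_sl c_kk c_kp c_kl c_pk c_pp c_pl c_lk c_lp c_ll)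
qed


section \<open>Ideals\<close>

lemma ideal_gen': "s \<in> S \<Longrightarrow> s \<in> two_sided_ideal S"
  using two_sided_ideal.gen[of s S 1 1] by simp

lemma ideal_left: "x \<in> two_sided_ideal S \<Longrightarrow> a * x \<in> two_sided_ideal S"
proof (induction rule: two_sided_ideal.induct)
  case zero then show ?case by (simp add: two_sided_ideal.zero)
next
  case (gen s b c)
  have "a * (b * s * c) = (a * b) * s * c" by (simp add: mult.assoc)
  then show ?case using two_sided_ideal.gen[OF gen] by simp
next
  case (add x y)
  then show ?case by (simp add: distrib_left two_sided_ideal.add)
qed

lemma ideal_right: "x \<in> two_sided_ideal S \<Longrightarrow> x * a \<in> two_sided_ideal S"
proof (induction rule: two_sided_ideal.induct)
  case zero then show ?case by (simp add: two_sided_ideal.zero)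
next
  case (gen s b c)
  have "(b * s * c) * a = b * s * (c * a)" by (simp add: mult.assoc)
  then show ?case using two_sided_ideal.gen[OF gen] by simp
next
  case (add x y)
  then show ?case by (simp add: distrib_right two_sided_ideal.add)
qed

lemma ideal_add: "x \<in> two_sided_ideal S \<Longrightarrow> y \<in> two_sided_ideal S \<Longrightarrow> x + y \<in> two_sided_ideal S"
  by (rule two_sided_ideal.add)

lemma ideal_uminus: "x \<in> two_sided_ideal S \<Longrightarrow> - x \<in> two_sided_ideal S"
  using ideal_left[of x S "-1"] by simp

lemma ideal_diff: "x \<in> two_sided_ideal S \<Longrightarrow> y \<in> two_sided_ideal S \<Longrightarrow> x - y \<in> two_sided_ideal S"
  unfolding diff_conv_add_uminus by (intro ideal_add ideal_uminus)

lemma ideal_sum: "(\<And>i. i \<in> I \<Longrightarrow> f i \<in> two_sided_ideal S) \<Longrightarrow> sum f I \<in> two_sided_ideal S"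
proof (induction I rule: infinite_finite_induct)
  case (infinite A) then show ?case by (simp add: two_sided_ideal.zero)
next
  case empty then show ?case by (simp add: two_sided_ideal.zero)
next
  case (insert x F) then show ?case by (simp add: two_sided_ideal.add)
qed

lemma ideal_mono: "S \<subseteq> two_sided_ideal T \<Longrightarrow> two_sided_ideal S \<subseteq> two_sided_ideal T"
proof
  fix x assume ST: "S \<subseteq> two_sided_ideal T" and "x \<in> two_sided_ideal S"
  then show "x \<in> two_sided_ideal T"
  proof (induction rule: two_sided_ideal.induct[OF \<open>x \<in> _\<close>])
    case 1 show ?case by (rule two_sided_ideal.zero)
  next
    case (2 s a b) then show ?case by (intro ideal_left ideal_right) auto
  next
    case (3 x y) then show ?case by (intro ideal_add) auto
  qed
qed

lemma s1inv: "sigma1 (ginv g) = sigma1 g" by (cases g) auto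
lemma s2inv: "sigma2 (ginv g) = - sigma2 g" by (cases g) auto

lemma Dh_ker: "subst sigma1 (Dh g h) = 0" "subst sigma2 (Dh g h) = 0"
  by (simp_all add: Dh_def subst_diff subst_mult s1inv s2inv)

definition K :: "gen ncpoly set" where
  "K = {f. subst sigma1 f = 0 \<and> subst sigma2 f = 0}"

lemma ideal_sub_K: "S \<subseteq> K \<Longrightarrow> two_sided_ideal S \<subseteq> K"
proof
  fix x assume "S \<subseteq> K" "x \<in> two_sided_ideal S"
  then show "x \<in> K"
    by (induction rule: two_sided_ideal.induct[OF \<open>x \<in> _\<close>])
       (auto simp: K_def subst_mult subst_add)
qed

lemma rtt_K: "two_sided_ideal (rtt_rels 1 1 1) \<subseteq> K"
  apply (rule ideal_sub_K)
  unfolding rtt_eq K_def using rel_form Dh_ker by fastforce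




lemma Dfull: "g' = ginv g \<Longrightarrow> h' = ginv h \<Longrightarrow> var g * var h - var g' * var h' \<in> two_sided_ideal (rtt_rels 1 1 1)"
proof -
  assume "g' = ginv g" "h' = ginv h"
  have "var g * var h - var g' * var h' = scal 2 * Dh g h"
    unfolding Dh_def \<open>g' = _\<close> \<open>h' = _\<close>
    by (simp add: right_diff_distrib mult.assoc[symmetric] scal_mult[symmetric])
  then show ?thesis using ideal_left[OF ideal_gen'[OF Dh_in]] by simp
qed

lemma half_sq: "scal (1/2) * X * (scal (1/2) * Y) = scal (1/4) * (X * (Y::'g ncpoly))"
proof -
  have "scal (1/2) * X * (scal (1/2) * Y) = scal (1/2) * scal (1/2) * (X * Y)"
    by (metis mult.assoc scal_comm)
  also have "scal (1/2) * scal (1/2) = (scal (1/4) :: 'g ncpoly)"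
    by (simp add: scal_mult[symmetric])
  finally show ?thesis .
qed

lemma L_xy: "(scal (1/2) * (a + a')) * (scal (1/2) * (b - b')) = scal (1/4) * ((a*b - a'*b') - (a*b' - a'*b))"
  unfolding half_sq by (simp add: algebra_simps)
lemma L_yx: "(scal (1/2) * (b - b')) * (scal (1/2) * (a + a')) = scal (1/4) * ((b*a - b'*a') + (b*a' - b'*a))"
  unfolding half_sq by (simp add: algebra_simps)
lemma L_ry: "var c * (scal (1/2) * (b - b')) = scal (1/2) * (var c*b - var c*b')"
  by (metis mult.assoc scal_comm right_diff_distrib)
lemma L_yr: "(scal (1/2) * (b - b')) * var c = scal (1/2) * (b*var c - b'*var c)"
  by (metis mult.assoc left_diff_distrib)

lemma forty_sub: "forty_rels \<subseteq> two_sided_ideal (rtt_rels 1 1 1)"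
  unfolding forty_rels_def X1_def X2_def
  apply (auto simp only: kt_def lt_def pt_def qt_def mt_def nt_def st_def tt_def L_xy L_yx L_ry L_yr)
  apply (rule ideal_left, ((rule Dfull; simp) | ((rule ideal_diff | rule ideal_add); rule Dfull; simp)))+
  done




fun tau :: "tgen \<Rightarrow> gen ncpoly" where
  "tau Tk = kt" | "tau Tl = lt" | "tau Tp = pt" | "tau Tq = qt" | "tau Tr = var Gr"
| "tau Tm = mt" | "tau Tn = nt" | "tau Ts = st" | "tau Tt = tt"

definition prj :: "tgen set \<Rightarrow> tgen \<Rightarrow> tgen ncpoly" where
  "prj A t = (if t \<in> A then var t else 0)"

definition rho :: "gen \<Rightarrow> tgen ncpoly" where
  "rho g = sigma1 g + sigma2 g"

lemma hh: "scal (1/2) * (a + a) = (a :: 'g ncpoly)"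
proof -
  have "scal (1/2) * (a + a) = (scal (1/2) + scal (1/2)) * a"
    by (simp add: distrib_left distrib_right)
  also have "scal (1/2) + scal (1/2) = (1 :: 'g ncpoly)"
    by (simp add: scal_add[symmetric])
  finally show ?thesis by simp
qed

lemma h1: "scal (1/2) * (a + b) + scal (1/2) * (a - b) = (a :: 'g ncpoly)"
proof -
  have "scal (1/2) * (a + b) + scal (1/2) * (a - b) = scal (1/2) * ((a + b) + (a - b))"
    by (rule distrib_left[symmetric])
  also have "(a + b) + (a - b) = a + a" by simp
  finally show ?thesis using hh by simp
qed

lemma h2: "scal (1/2) * (a + b) - scal (1/2) * (a - b) = (b :: 'g ncpoly)"
proof -
  have "scal (1/2) * (a + b) - scal (1/2) * (a - b) = scal (1/2) * ((a + b) - (a - b))"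
    by (rule right_diff_distrib[symmetric])
  also have "(a + b) - (a - b) = b + b" by simp
  finally show ?thesis using hh by simp
qed

lemma F1: "(\<lambda>g. subst tau (rho g)) = var"
proof
  fix g show "subst tau (rho g) = var g"
    by (cases g) (simp_all add: rho_def subst_add subst_uminus kt_def nt_def lt_def mt_def
        pt_def tt_def qt_def st_def h1 h2 subst_diff)
qed

lemma F2p: "subst (prj TX1) (rho g) = sigma1 g" "subst (prj TX2) (rho g) = sigma2 g"
   apply (cases g; simp add: rho_def prj_def TX1_def TX2_def subst_add subst_uminus subst_diff)
  apply (cases g; simp add: rho_def prj_def TX1_def TX2_def subst_add subst_uminus subst_diff)
  done

lemma F2: "(\<lambda>g. subst (prj TX1) (rho g)) = sigma1" "(\<lambda>g. subst (prj TX2) (rho g)) = sigma2"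
  by (rule ext, rule F2p)+

lemma F3p: "subst sigma1 (tau t) = prj TX1 t" "subst sigma2 (tau t) = prj TX2 t"
  by (cases t; simp add: prj_def TX1_def TX2_def subst_add subst_diff subst_mult
        kt_def nt_def lt_def mt_def pt_def tt_def qt_def st_def hh)+

lemma F3: "(\<lambda>t. subst sigma1 (tau t)) = prj TX1" "(\<lambda>t. subst sigma2 (tau t)) = prj TX2"
  by (rule ext, rule F3p)+

lemma mon_pi: "mon (prj A) w = (if set (letters w) \<subseteq> A then Poly_Mapping.single w 1 else 0)"
proof -
  have "prod_list (map (prj A) xs) = (if set xs \<subseteq> A then Poly_Mapping.single (Word xs) 1 else 0)" for xs
    by (induction xs) (auto simp: prj_def var_def mult_single plus_word_def)
  then show ?thesis by (cases w) (simp add: mon_def)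
qed

lemma LR: "Poly_Mapping.lookup (subst (prj A) F) w0 =
   (if set (letters w0) \<subseteq> A then Poly_Mapping.lookup F w0 else 0)"
proof -
  have "Poly_Mapping.lookup (subst (prj A) F) w0 =
     (\<Sum>w\<in>Poly_Mapping.keys F. Poly_Mapping.lookup F w * Poly_Mapping.lookup (mon (prj A) w) w0)"
    unfolding subst_def mon_def[symmetric] by (simp add: lookup_sum lookup_scal_mult)
  also have "\<dots> = (\<Sum>w\<in>Poly_Mapping.keys F. if w = w0 then
       (if set (letters w0) \<subseteq> A then Poly_Mapping.lookup F w0 else 0) else 0)"
    by (rule sum.cong) (auto simp: mon_pi lookup_single when_def)
  also have "\<dots> = (if set (letters w0) \<subseteq> A then Poly_Mapping.lookup F w0 else 0)"
    by (simp add: sum.delta in_keys_iff)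
  finally show ?thesis .
qed

lemma adj: "(\<exists>a\<in>set xs. P a) \<Longrightarrow> (\<exists>b\<in>set xs. \<not> P b) \<Longrightarrow>
   \<exists>us a b vs. xs = us @ a # b # vs \<and> P a \<noteq> P b"
proof (induction xs)
  case Nil then show ?case by simp
next
  case (Cons x ys)
  show ?case
  proof (cases ys)
    case Nil with Cons.prems show ?thesis by auto
  next
    case (Cons y zs)
    show ?thesis
    proof (cases "P x = P y")
      case False
      then show ?thesis using Cons by (metis append.left_neutral)
    next
      case True
      have "(\<exists>a\<in>set ys. P a)" "(\<exists>b\<in>set ys. \<not> P b)"
        using Cons.prems True Cons by auto
      then obtain us a b vs where "ys = us @ a # b # vs" "P a \<noteq> P b"
        using Cons.IH by blast
      then show ?thesis by (metis append_Cons)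
    qed
  qed
qed

lemma tauX: "t \<in> TX1 \<Longrightarrow> tau t \<in> X1" "t \<notin> TX1 \<Longrightarrow> tau t \<in> X2"
  by (cases t; simp add: TX1_def X1_def X2_def)+

lemma notTX2: "t \<notin> TX2 \<Longrightarrow> t \<in> TX1"
  by (cases t; simp add: TX1_def TX2_def)

lemma mixed: "\<not> set xs \<subseteq> TX1 \<Longrightarrow> \<not> set xs \<subseteq> TX2 \<Longrightarrow> prod_list (map tau xs) \<in> two_sided_ideal forty_rels"
proof -
  assume n1: "\<not> set xs \<subseteq> TX1" and n2: "\<not> set xs \<subseteq> TX2"
  have "\<exists>a\<in>set xs. a \<in> TX1" using n2 notTX2 by blast
  moreover have "\<exists>b\<in>set xs. b \<notin> TX1" using n1 by blast
  ultimately obtain us a b vs where xs: "xs = us @ a # b # vs" and ab: "(a \<in> TX1) \<noteq> (b \<in> TX1)"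
    using adj[of xs "\<lambda>t. t \<in> TX1"] by blast
  have "tau a * tau b \<in> forty_rels"
    using ab tauX unfolding forty_rels_def by (cases "a \<in> TX1") blast+
  then have "prod_list (map tau us) * (tau a * tau b) * prod_list (map tau vs) \<in> two_sided_ideal forty_rels"
    by (rule two_sided_ideal.gen)
  then show ?thesis unfolding xs by (simp add: mult.assoc)
qed

lemma K_sub: "K \<subseteq> two_sided_ideal forty_rels"
proof
  fix f assume "f \<in> K"
  then have s1: "subst sigma1 f = 0" and s2: "subst sigma2 f = 0" by (auto simp: K_def)
  define F where "F = subst rho f"
  have fF: "f = subst tau F" unfolding F_def subst_comp F1 by simp
  have z1: "subst (prj TX1) F = 0" unfolding F_def subst_comp F2 by (rule s1)
  have z2: "subst (prj TX2) F = 0" unfolding F_def subst_comp F2 by (rule s2)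
  have nw: "\<not> set (letters w) \<subseteq> TX1 \<and> \<not> set (letters w) \<subseteq> TX2" if "w \<in> Poly_Mapping.keys F" for w
    using LR[of TX1 F w] LR[of TX2 F w] that z1 z2 by (auto simp: in_keys_iff)
  have "subst tau F \<in> two_sided_ideal forty_rels"
    unfolding subst_def
    by (rule ideal_sum, rule ideal_left, rule mixed) (use nw in auto)
  then show "f \<in> two_sided_ideal forty_rels" using fF by simp
qed

lemma free_pi: "subst (prj A) F \<in> free_on A"
  unfolding free_on_def using LR[of A F] by (auto simp: in_keys_iff split: if_splits)

lemma const_pi: "const_term (subst (prj A) F) = const_term F"
  unfolding const_term_def by (simp add: LR zero_word_def)

lemma restr:
  assumes f: "f \<in> free_on A" and g: "g \<in> free_on B" and AB: "A \<inter> B = {}"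
    and c: "const_term f = const_term g"
  shows "subst (prj A) (f + g - scal (const_term f)) = f"
proof (rule poly_mapping_eqI)
  fix w
  show "Poly_Mapping.lookup (subst (prj A) (f + g - scal (const_term f))) w = Poly_Mapping.lookup f w"
  proof (cases "set (letters w) \<subseteq> A")
    case True
    show ?thesis
    proof (cases "w = 0")
      case True
      then show ?thesis using c \<open>set (letters w) \<subseteq> A\<close>
        by (simp add: LR lookup_add lookup_minus scal_def const_term_def)
    next
      case False
      then have "letters w \<noteq> []" by (cases w) (auto simp: zero_word_def)
      then have "\<not> set (letters w) \<subseteq> B" using True AB by (cases "letters w") auto
      then have "Poly_Mapping.lookup g w = 0" using g by (auto simp: free_on_def in_keys_iff)
      then show ?thesis using True False
        by (simp add: LR lookup_add lookup_minus scal_def lookup_single when_def)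
    qed
  next
    case False
    then have "Poly_Mapping.lookup f w = 0" using f by (auto simp: free_on_def in_keys_iff)
    then show ?thesis using False by (simp add: LR)
  qed
qed

lemma image_eq: "(\<lambda>f. (subst sigma1 f, subst sigma2 f)) ` UNIV = fibre_product"
proof
  show "(\<lambda>f. (subst sigma1 f, subst sigma2 f)) ` UNIV \<subseteq> fibre_product"
  proof clarify
    fix f
    have e1: "subst sigma1 f = subst (prj TX1) (subst rho f)" by (simp add: subst_comp F2)
    have e2: "subst sigma2 f = subst (prj TX2) (subst rho f)" by (simp add: subst_comp F2)
    show "(subst sigma1 f, subst sigma2 f) \<in> fibre_product"
      unfolding fibre_product_def e1 e2 by (simp add: free_pi const_pi)
  qed
next
  show "fibre_product \<subseteq> (\<lambda>f. (subst sigma1 f, subst sigma2 f)) ` UNIV"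
  proof clarify
    fix f g assume "(f, g) \<in> fibre_product"
    then have f: "f \<in> free_on TX1" and g: "g \<in> free_on TX2" and c: "const_term f = const_term g"
      by (auto simp: fibre_product_def)
    have d: "TX1 \<inter> TX2 = {}" "TX2 \<inter> TX1 = {}" by (auto simp: TX1_def TX2_def)
    define F where "F = f + g - scal (const_term f)"
    have F': "F = g + f - scal (const_term g)" unfolding F_def c by (simp add: add.commute)
    have "subst sigma1 (subst tau F) = f"
      unfolding subst_comp F3 F_def by (rule restr[OF f g d(1) c])
    moreover have "subst sigma2 (subst tau F) = g"
      unfolding subst_comp F3 F' by (rule restr[OF g f d(2) c[symmetric]])
    ultimately have "(f, g) = (\<lambda>f. (subst sigma1 f, subst sigma2 f)) (subst tau F)" by simp
    then show "(f, g) \<in> range (\<lambda>f. (subst sigma1 f, subst sigma2 f))"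
      by (rule image_eqI) simp
  qed
qed


theorem mainTheorem5:
  shows "two_sided_ideal (rtt_rels 1 1 1) = two_sided_ideal forty_rels
       \<and> {f. subst sigma1 f = 0 \<and> subst sigma2 f = 0} = two_sided_ideal (rtt_rels 1 1 1)
       \<and> (\<lambda>f. (subst sigma1 f, subst sigma2 f)) ` UNIV = fibre_product"
proof -
  have 1: "two_sided_ideal (rtt_rels 1 1 1) \<subseteq> K" by (rule rtt_K)
  have 2: "K \<subseteq> two_sided_ideal forty_rels" by (rule K_sub)
  have 3: "two_sided_ideal forty_rels \<subseteq> two_sided_ideal (rtt_rels 1 1 1)" by (rule ideal_mono[OF forty_sub])
  have a: "two_sided_ideal (rtt_rels 1 1 1) = two_sided_ideal forty_rels" using 1 2 3 by blast
  have b: "{f. subst sigma1 f = 0 \<and> subst sigma2 f = 0} = two_sided_ideal (rtt_rels 1 1 1)"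
    using 1 2 3 unfolding K_def by blast
  show ?thesis using a b image_eq by blast
qed

end
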